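(* In the continuous Donation Game, for every $\gamma\in\mathbb{R}$ there do not exist a bounded measurable $\psi:[0,K]\to\mathbb{R}$, a probability measure $\sigma_X^0$ on $[0,K]$ and a Markov kernel $\sigma_X[x,y]$ from $[0,K]^2$ to $[0,K]$ such that for all $x,y\in[0,K]$, $$u_X(x,y)-\gamma=\psi(x)-\lambda\int\psi(s)\,d\sigma_X[x,y](s)-(1-\lambda)\int\psi(s)\,d\sigma_X^0(s).$$
   Context: Continuous Donation Game: fix $K>0$ and measurable nondecreasing functions $b,c:[0,K]\to\mathbb{R}$ with $b(0)=c(0)=0$ and $b(s)>c(s)$ for $s>0$. Action spaces $S_X=S_Y=[0,K]$, payoffs $u_X(x,y)=b(y)-c(x)$, $u_Y(x,y)=b(x)-c(y)$, discount factor $\lambda\in(0,1)$. *)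

theory Defs
  imports "HOL-Probability.Probability"
begin

definition act_space :: "real \<Rightarrow> real measure" where
  "act_space K = restrict_space borel {0..K}"

definition donation_game :: "real \<Rightarrow> (real \<Rightarrow> real) \<Rightarrow> (real \<Rightarrow> real) \<Rightarrow> bool" where
  "donation_game K b c \<longleftrightarrow> K > 0
     \<and> b \<in> borel_measurable (act_space K) \<and> c \<in> borel_measurable (act_space K)
     \<and> mono_on {0..K} b \<and> mono_on {0..K} c
     \<and> b 0 = 0 \<and> c 0 = 0 \<and> (\<forall>s\<in>{0<..K}. b s > c s)"

definition u_X :: "(real \<Rightarrow> real) \<Rightarrow> (real \<Rightarrow> real) \<Rightarrow> real \<Rightarrow> real \<Rightarrow> real" where
  "u_X b c x y = b y - c x"

end

theory Submission
  imports Defs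
begin

lemma int_bounds:
  fixes psi :: "real \<Rightarrow> real"
  assumes N: "N \<in> space (prob_algebra (act_space K))"
    and pm: "psi \<in> borel_measurable (act_space K)"
    and lo: "\<And>s. s \<in> {0..K} \<Longrightarrow> m \<le> psi s"
    and hi: "\<And>s. s \<in> {0..K} \<Longrightarrow> psi s \<le> M"
  shows "m \<le> (\<integral>s. psi s \<partial>N) \<and> (\<integral>s. psi s \<partial>N) \<le> M"
proof -
  have sN: "sets N = sets (act_space K)" and P: "prob_space N"
    using N by (auto simp: space_prob_algebra)
  have spN: "space N = {0..K}"
    using sets_eq_imp_space_eq[OF sN] by (simp add: act_space_def space_restrict_space)
  have pmN: "psi \<in> borel_measurable N"
    using pm measurable_cong_sets[OF sN refl] by blast
  interpret prob_space N by (rule P)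
  have intg: "integrable N psi"
    apply (rule integrable_const_bound[where B="max \<bar>m\<bar> \<bar>M\<bar>"])
    using lo hi spN pmN by (auto intro!: AE_I2 simp: abs_le_iff) (smt (verit, best))+
  have a1: "AE x in N. m \<le> psi x" using lo spN by (auto intro!: AE_I2)
  have a2: "AE x in N. psi x \<le> M" using hi spN by (auto intro!: AE_I2)
  show ?thesis
    using integral_ge_const[OF intg a1] integral_le_const[OF intg a2] by simp
qed

theorem mainTheorem15:
  fixes K lam gamma :: real and b c :: "real \<Rightarrow> real"
  assumes "donation_game K b c"
    and "0 < lam" and "lam < 1"
  shows "\<not> (\<exists>(psi :: real \<Rightarrow> real) (sigma0 :: real measure) (sigma :: real \<Rightarrow> real \<Rightarrow> real measure).
            psi \<in> borel_measurable (act_space K)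
          \<and> (\<exists>B. \<forall>s\<in>{0..K}. \<bar>psi s\<bar> \<le> B)
          \<and> sigma0 \<in> space (prob_algebra (act_space K))
          \<and> (\<lambda>(x, y). sigma x y) \<in> measurable (act_space K \<Otimes>\<^sub>M act_space K) (prob_algebra (act_space K))
          \<and> (\<forall>x\<in>{0..K}. \<forall>y\<in>{0..K}.
               u_X b c x y - gamma
                 = psi x - lam * (\<integral>s. psi s \<partial>(sigma x y)) - (1 - lam) * (\<integral>s. psi s \<partial>sigma0)))"
proof
  assume "\<exists>(psi :: real \<Rightarrow> real) (sigma0 :: real measure) (sigma :: real \<Rightarrow> real \<Rightarrow> real measure).
            psi \<in> borel_measurable (act_space K)
          \<and> (\<exists>B. \<forall>s\<in>{0..K}. \<bar>psi s\<bar> \<le> B)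
          \<and> sigma0 \<in> space (prob_algebra (act_space K))
          \<and> (\<lambda>(x, y). sigma x y) \<in> measurable (act_space K \<Otimes>\<^sub>M act_space K) (prob_algebra (act_space K))
          \<and> (\<forall>x\<in>{0..K}. \<forall>y\<in>{0..K}.
               u_X b c x y - gamma
                 = psi x - lam * (\<integral>s. psi s \<partial>(sigma x y)) - (1 - lam) * (\<integral>s. psi s \<partial>sigma0))"
  then obtain psi sigma0 sigma B where pm: "psi \<in> borel_measurable (act_space K)"
    and B: "\<forall>s\<in>{0..K}. \<bar>psi s\<bar> \<le> B"
    and sm: "(\<lambda>(x, y). sigma x y) \<in> measurable (act_space K \<Otimes>\<^sub>M act_space K) (prob_algebra (act_space K))"
    and eq: "\<forall>x\<in>{0..K}. \<forall>y\<in>{0..K}.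
               u_X b c x y - gamma
                 = psi x - lam * (\<integral>s. psi s \<partial>(sigma x y)) - (1 - lam) * (\<integral>s. psi s \<partial>sigma0)"
    by blast
  have K: "K > 0" and bm: "mono_on {0..K} b" and cm: "mono_on {0..K} c"
    and b0: "b 0 = 0" and c0: "c 0 = 0" and bc: "b K > c K"
    using assms(1) unfolding donation_game_def by auto
  define S where "S = psi ` {0..K}"
  define M where "M = Sup S"
  define m where "m = Inf S"
  have ne: "S \<noteq> {}" using K by (auto simp: S_def)
  have bda: "bdd_above S" unfolding S_def bdd_above_def using B by (auto simp: abs_le_iff)
  have bdb: "bdd_below S" unfolding S_def bdd_below_def using B
    by (metis abs_le_iff image_iff minus_le_iff)
  have hi: "\<And>s. s \<in> {0..K} \<Longrightarrow> psi s \<le> M"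
    unfolding M_def using bda by (auto intro!: cSup_upper simp: S_def)
  have lo: "\<And>s. s \<in> {0..K} \<Longrightarrow> m \<le> psi s"
    unfolding m_def using bdb by (auto intro!: cInf_lower simp: S_def)
  have sig: "sigma x y \<in> space (prob_algebra (act_space K))" if "x \<in> {0..K}" "y \<in> {0..K}" for x y
    using measurable_space[OF sm, of "(x,y)"] that
    by (simp add: space_pair_measure act_space_def space_restrict_space)
  have I: "m \<le> (\<integral>s. psi s \<partial>(sigma x y)) \<and> (\<integral>s. psi s \<partial>(sigma x y)) \<le> M"
    if "x \<in> {0..K}" "y \<in> {0..K}" for x y
    using int_bounds[OF sig[OF that] pm lo hi] by blast
  define C where "C = (1 - lam) * (\<integral>s. psi s \<partial>sigma0)"
  have K0: "0 \<in> {0..K}" "K \<in> {0..K}" using K by auto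
  define R where "R = lam * (M - m) + c K - b K"
  have diff: "psi x1 \<le> psi x2 + R" if "x1 \<in> {0..K}" "x2 \<in> {0..K}" for x1 x2
  proof -
    have e1: "b 0 - c x1 - gamma = psi x1 - lam * (\<integral>s. psi s \<partial>(sigma x1 0)) - C"
      using eq that K0 by (auto simp: u_X_def C_def)
    have e2: "b K - c x2 - gamma = psi x2 - lam * (\<integral>s. psi s \<partial>(sigma x2 K)) - C"
      using eq that K0 by (auto simp: u_X_def C_def)
    have c1: "c x1 \<ge> 0" using cm that K0 c0 by (metis atLeastAtMost_iff mono_onD)
    have c2: "c x2 \<le> c K" using cm that K0 by (metis atLeastAtMost_iff mono_onD)
    have i1: "(\<integral>s. psi s \<partial>(sigma x1 0)) \<le> M" using I that K0 by blast
    have i2: "m \<le> (\<integral>s. psi s \<partial>(sigma x2 K))" using I that K0 by blast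
    have "lam * (\<integral>s. psi s \<partial>(sigma x1 0)) \<le> lam * M"
      using i1 assms(2) by (simp add: mult_left_mono)
    moreover have "lam * m \<le> lam * (\<integral>s. psi s \<partial>(sigma x2 K))"
      using i2 assms(2) by (simp add: mult_left_mono)
    ultimately show ?thesis using e1 e2 c1 c2 b0 unfolding R_def by (simp add: algebra_simps)
  qed
  have "M \<le> psi x2 + R" if "x2 \<in> {0..K}" for x2
    unfolding M_def using ne by (rule cSup_least) (auto simp: S_def intro: diff[OF _ that])
  hence "M - R \<le> m"
    unfolding m_def using ne by (intro cInf_greatest) (auto simp: S_def, smt (verit))
  moreover have "m \<le> M" using lo hi K0 by (meson order_trans)
  ultimately have "(1 - lam) * (M - m) \<le> c K - b K" unfolding R_def by (simp add: algebra_simps)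
  moreover have "(1 - lam) * (M - m) \<ge> 0" using \<open>m \<le> M\<close> assms(3) by simp
  ultimately show False using bc by simp
qed

end
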